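(* Let $\lambda_1,\lambda_2$ be as in the context. For $K\in(-1,1)\setminus\{0\}$ let $b_K$ solve $b_K'(v)=\sqrt{\lambda_1^2-K(\lambda_1^2\cos^2 b_K(v)+\lambda_2^2\sin^2 b_K(v))}$, $b_K(0)=0$, let $W_K>0$ be the unique number with $b_K(W_K)=\pi$, let $x_{3,K}$ solve $x_{3,K}'(v)=\frac{\lambda_1\lambda_2K}{\lambda_1+b_K'(v)}$, $x_{3,K}(0)=0$, and let $\mathfrak{H}_K=X_K(\mathbb{C})\subset\widetilde{E(2)}$ be the helicoid given by $$X_K(u+iv)=\Big(\tfrac{1}{\lambda_1^2\lambda_2}\big(\tfrac{1}{\lambda_1}\cos x_{3,K}(v)\sin b_K(v)+\tfrac{1}{\lambda_2}\sin x_{3,K}(v)\cos b_K(v)\big)x_{3,K}'(v)\sinh(-\lambda_1u),\ \tfrac{1}{\lambda_1^2\lambda_2}\big(\tfrac{1}{\lambda_1}\sin x_{3,K}(v)\sin b_K(v)-\tfrac{1}{\lambda_2}\cos x_{3,K}(v)\cos b_K(v)\big)x_{3,K}'(v)\sinh(-\lambda_1u),\ x_{3,K}(v)\Big).$$ Then for every real number $T\neq0$ there exists $K\in(-1,1)\setminus\{0\}$ such that $\mathfrak{H}_K$ has period $T$, i.e. $2|x_{3,K}(W_K)|=|T|$, so that $\mathfrak{H}_K$ is invariant under left multiplication by $(0,0,T)$.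
   Context: $\widetilde{E(2)}$ is $\mathbb{R}^3$ with coordinates $(x_1,x_2,x_3)$ and group law $(a_1,b_1,c_1)*(a_2,b_2,c_2)=(a_1+a_2\cos c_1-b_2\sin c_1,\ b_1+a_2\sin c_1+b_2\cos c_1,\ c_1+c_2)$, with the left-invariant metric $\lambda_1^2(\cos x_3\,dx_1+\sin x_3\,dx_2)^2+\lambda_2^2(-\sin x_3\,dx_1+\cos x_3\,dx_2)^2+\frac{1}{\lambda_1^2\lambda_2^2}dx_3^2$, where either $\lambda_1>\lambda_2>0$ or $\lambda_1=\lambda_2=1$. The helicoid $\mathfrak{H}_K$ satisfies $(0,0,2x_{3,K}(W_K))*X_K(u+iv)=X_K(u+i(v+2W_K))$; its period is the translation length $2x_{3,K}(W_K)$, and since $(0,0,-t)$ is the inverse of $(0,0,t)$, invariance under $(0,0,t)$ is equivalent to invariance under $(0,0,-t)$. *)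

theory Defs
  imports "HOL-Analysis.Analysis"
begin

text \<open>Group law of the universal cover of E(2), points of R^3 as triples.\<close>
definition e2_mult :: "real \<times> real \<times> real \<Rightarrow> real \<times> real \<times> real \<Rightarrow> real \<times> real \<times> real" where
  "e2_mult p q = (case p of (a1, b1, c1) \<Rightarrow> case q of (a2, b2, c2) \<Rightarrow>
     (a1 + a2 * cos c1 - b2 * sin c1, b1 + a2 * sin c1 + b2 * cos c1, c1 + c2))"

definition admissible_lambdas :: "real \<Rightarrow> real \<Rightarrow> bool" where
  "admissible_lambdas l1 l2 \<longleftrightarrow> (l1 > l2 \<and> l2 > 0) \<or> (l1 = 1 \<and> l2 = 1)"

definition bK_rhs :: "real \<Rightarrow> real \<Rightarrow> real \<Rightarrow> real \<Rightarrow> real" where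
  "bK_rhs l1 l2 K s = sqrt (l1\<^sup>2 - K * (l1\<^sup>2 * (cos s)\<^sup>2 + l2\<^sup>2 * (sin s)\<^sup>2))"

definition helicoid_data :: "real \<Rightarrow> real \<Rightarrow> real \<Rightarrow> (real \<Rightarrow> real) \<Rightarrow> (real \<Rightarrow> real) \<Rightarrow> real \<Rightarrow> bool" where
  "helicoid_data l1 l2 K b x3 W \<longleftrightarrow>
     (\<forall>v. (b has_real_derivative bK_rhs l1 l2 K (b v)) (at v)) \<and> b 0 = 0 \<and>
     (\<forall>v. (x3 has_real_derivative (l1 * l2 * K / (l1 + bK_rhs l1 l2 K (b v)))) (at v)) \<and> x3 0 = 0 \<and>
     W > 0 \<and> b W = pi \<and> (\<forall>w>0. b w = pi \<longrightarrow> w = W)"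

definition helicoid_X :: "real \<Rightarrow> real \<Rightarrow> real \<Rightarrow> (real \<Rightarrow> real) \<Rightarrow> (real \<Rightarrow> real) \<Rightarrow> complex \<Rightarrow> real \<times> real \<times> real" where
  "helicoid_X l1 l2 K b x3 z =
     (let u = Re z; v = Im z;
          dx3 = l1 * l2 * K / (l1 + bK_rhs l1 l2 K (b v)) in
      (1 / (l1\<^sup>2 * l2) * (1 / l1 * cos (x3 v) * sin (b v) + 1 / l2 * sin (x3 v) * cos (b v)) * dx3 * sinh (- l1 * u),
       1 / (l1\<^sup>2 * l2) * (1 / l1 * sin (x3 v) * sin (b v) - 1 / l2 * cos (x3 v) * cos (b v)) * dx3 * sinh (- l1 * u),
       x3 v))"

end

theory Submission imports Defs "HOL-Complex_Analysis.Conformal_Mappings" begin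

definition sint :: "(real \<Rightarrow> real) \<Rightarrow> real \<Rightarrow> real" where
  "sint f u = interval_lebesgue_integral lborel (ereal 0) (ereal u) f"

lemma sint_0[simp]: "sint f 0 = 0"
  unfolding sint_def by simp

lemma FTC_all:
  fixes f :: "real \<Rightarrow> real"
  assumes "continuous_on UNIV f"
  shows "(sint f has_real_derivative f x) (at x)"
proof -
  have "((\<lambda>u. interval_lebesgue_integral lborel (ereal 0) (ereal u) f) has_vector_derivative f x) (at x within {-\<bar>x\<bar>-1..\<bar>x\<bar>+1})"
    using interval_integral_FTC2[of "-\<bar>x\<bar>-1" 0 "\<bar>x\<bar>+1" f x] continuous_on_subset[OF assms] by auto
  then have "((\<lambda>u. interval_lebesgue_integral lborel (ereal 0) (ereal u) f) has_vector_derivative f x) (at x within {-\<bar>x\<bar>-1<..<\<bar>x\<bar>+1})"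
    by (rule has_vector_derivative_within_subset) auto
  moreover have "x \<in> {-\<bar>x\<bar>-1<..<\<bar>x\<bar>+1}" by auto
  ultimately have "((\<lambda>u. interval_lebesgue_integral lborel (ereal 0) (ereal u) f) has_vector_derivative f x) (at x)"
    using has_vector_derivative_within_open[OF _ open_greaterThanLessThan] by blast
  thus ?thesis unfolding sint_def by (simp add: has_real_derivative_iff_has_vector_derivative)
qed

lemma Q_eq: fixes l1 l2 K s :: real shows "l1\<^sup>2 - K * (l1\<^sup>2 * (cos s)\<^sup>2 + l2\<^sup>2 * (sin s)\<^sup>2) = l1\<^sup>2 * (1 - K) + K * (l1\<^sup>2 - l2\<^sup>2) * (sin s)\<^sup>2"
proof -
  have c: "(cos s)\<^sup>2 = 1 - (sin s)\<^sup>2" using sin_cos_squared_add[of s] by linarith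
  show ?thesis unfolding c by (simp add: algebra_simps)
qed

lemma F_bounds:
  assumes "0 < l2" "l2 \<le> l1" "0 \<le> K" "K < 1"
  shows "l1 * sqrt (1 - K) \<le> bK_rhs l1 l2 K s" "bK_rhs l1 l2 K s \<le> l1" "0 < bK_rhs l1 l2 K s"
proof -
  have d: "0 \<le> l1\<^sup>2 - l2\<^sup>2" using assms by (simp add: power_mono)
  have s1: "(sin s)\<^sup>2 \<le> 1" by (simp add: abs_square_le_1)
  have q: "bK_rhs l1 l2 K s = sqrt (l1\<^sup>2 * (1 - K) + K * (l1\<^sup>2 - l2\<^sup>2) * (sin s)\<^sup>2)"
    unfolding bK_rhs_def Q_eq ..
  have lo: "l1\<^sup>2 * (1 - K) \<le> l1\<^sup>2 * (1 - K) + K * (l1\<^sup>2 - l2\<^sup>2) * (sin s)\<^sup>2"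
    using assms d by simp
  have a: "(l1\<^sup>2 - l2\<^sup>2) * (sin s)\<^sup>2 \<le> l1\<^sup>2 * 1"
    using assms d s1 by (intro mult_mono) auto
  have b: "K * ((l1\<^sup>2 - l2\<^sup>2) * (sin s)\<^sup>2) \<le> K * (l1\<^sup>2 * 1)"
    using a assms by (intro mult_left_mono) auto
  have hi: "l1\<^sup>2 * (1 - K) + K * (l1\<^sup>2 - l2\<^sup>2) * (sin s)\<^sup>2 \<le> l1\<^sup>2"
    using b by (simp add: algebra_simps)
  have "l1 * sqrt (1 - K) = sqrt (l1\<^sup>2 * (1 - K))" using assms by (simp add: real_sqrt_mult)
  also have "\<dots> \<le> bK_rhs l1 l2 K s" unfolding q using lo by (rule real_sqrt_le_mono)
  finally show "l1 * sqrt (1 - K) \<le> bK_rhs l1 l2 K s" .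
  have "bK_rhs l1 l2 K s \<le> sqrt (l1\<^sup>2)" unfolding q using hi by (rule real_sqrt_le_mono)
  thus "bK_rhs l1 l2 K s \<le> l1" using assms by simp
  have "0 < l1 * sqrt (1 - K)" using assms by simp
  thus "0 < bK_rhs l1 l2 K s" using \<open>l1 * sqrt (1 - K) \<le> bK_rhs l1 l2 K s\<close> by linarith
qed

lemma F_periodic: "bK_rhs l1 l2 K (s + pi) = bK_rhs l1 l2 K s"
  by (simp add: bK_rhs_def)

lemma F_cont [continuous_intros]:
  fixes f g :: "'a::t2_space \<Rightarrow> real"
  shows "continuous_on S f \<Longrightarrow> continuous_on S g \<Longrightarrow> continuous_on S (\<lambda>x. bK_rhs l1 l2 (g x) (f x))"
  unfolding bK_rhs_def by (intro continuous_intros)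

locale hk =
  fixes l1 l2 K :: real
  assumes l2pos: "0 < l2" and l21: "l2 \<le> l1" and K0: "0 \<le> K" and K1: "K < 1"
begin

abbreviation F where "F \<equiv> bK_rhs l1 l2 K"
definition G where "G = sint (\<lambda>t. 1 / F t)"
definition p where "p t = l1 * l2 * K / ((l1 + F t) * F t)"
definition Phi where "Phi = sint p"

lemma l1pos: "0 < l1" using l2pos l21 by linarith
lemma Fpos: "0 < F s" using F_bounds l2pos l21 K0 K1 by blast
lemma Fle: "F s \<le> l1" using F_bounds l2pos l21 K0 K1 by blast

lemma G_deriv: "(G has_real_derivative 1 / F s) (at s)"
  unfolding G_def
  by (rule FTC_all) (intro continuous_intros, use Fpos in \<open>auto simp: less_imp_neq[symmetric]\<close>)

lemma p_cont: "continuous_on S p"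
  unfolding p_def using Fpos l1pos
  by (intro continuous_intros) (auto simp: add_pos_pos less_imp_neq[symmetric])

lemma Phi_deriv: "(Phi has_real_derivative p s) (at s)"
  unfolding Phi_def by (rule FTC_all) (rule p_cont)

lemma G_0[simp]: "G 0 = 0" by (simp add: G_def)
lemma Phi_0[simp]: "Phi 0 = 0" by (simp add: Phi_def)

lemma G_strict: "s < t \<Longrightarrow> G s < G t"
proof (rule DERIV_pos_imp_increasing[of s t G])
  fix x show "\<exists>y. DERIV G x :> y \<and> 0 < y"
    using G_deriv[of x] Fpos[of x] by (intro exI[of _ "1 / F x"]) simp
qed

lemma G_smono: "strict_mono G" by (simp add: strict_monoI G_strict)
lemma G_inj: "inj G" using G_smono strict_mono_imp_inj_on by blast

lemma G_cont: "continuous_on S G"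
  using G_deriv by (meson DERIV_continuous continuous_at_imp_continuous_on)

lemma G_lower: assumes "0 < s" shows "s / l1 \<le> G s"
proof -
  obtain z where "G s - G 0 = (s - 0) * (1 / F z)"
    using MVT2[of 0 s G "\<lambda>z. 1 / F z"] assms G_deriv by auto
  moreover have "1 / l1 \<le> 1 / F z" using Fpos Fle by (simp add: frac_le)
  ultimately show ?thesis using assms
    by (simp add: divide_inverse)
qed

lemma G_upper: assumes "s < 0" shows "G s \<le> s / l1"
proof -
  obtain z where "G 0 - G s = (0 - s) * (1 / F z)"
    using MVT2[of s 0 G "\<lambda>z. 1 / F z"] assms G_deriv by auto
  moreover have "1 / l1 \<le> 1 / F z" using Fpos Fle by (simp add: frac_le)
  moreover have "(-s) * (1 / l1) \<le> (-s) * (1 / F z)"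
    using calculation(2) assms by (intro mult_left_mono) auto
  ultimately show ?thesis by simp
qed

lemma G_surj: "surj G"
proof -
  have "\<exists>x. G x = y" for y
  proof -
    define a where "a = - (\<bar>y\<bar> + 1) * l1"
    define b where "b = (\<bar>y\<bar> + 1) * l1"
    have "a < 0" using l1pos unfolding a_def by (simp add: mult_neg_pos)
    hence "G a \<le> a / l1" using G_upper[of a] by simp
    also have "a / l1 \<le> y" using l1pos by (simp add: a_def)
    finally have 1: "G a \<le> y" .
    have "y \<le> b / l1" using l1pos by (simp add: b_def)
    also have "b / l1 \<le> G b" using G_lower[of b] l1pos by (simp add: b_def)
    finally have 2: "y \<le> G b" .
    have "a \<le> b" using l1pos by (simp add: a_def b_def)
    then show ?thesis using IVT'[OF 1 2 _ G_cont] by blast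
  qed
  thus ?thesis by (metis surjI)
qed

lemma G_inv1[simp]: "G (inv G y) = y" using G_surj by (simp add: surj_f_inv_f)
lemma G_inv2[simp]: "inv G (G x) = x" using G_inj by (simp add: inv_f_f)

lemma uniq:
  assumes "\<forall>v. (c has_real_derivative F (c v)) (at v)" "c 0 = 0"
  shows "c v = inv G v"
proof -
  have "((\<lambda>v. G (c v) - v) has_real_derivative 0) (at x)" for x
  proof -
    have "((\<lambda>v. G (c v) - v) has_real_derivative (1 / F (c x) * F (c x) - 1)) (at x)"
      by (intro derivative_intros DERIV_chain2[OF G_deriv] assms(1)[rule_format])
    moreover have "1 / F (c x) * F (c x) - 1 = 0" using Fpos[of "c x"] by simp
    ultimately show ?thesis by simp
  qed
  then have "G (c v) - v = G (c 0) - 0" by (intro DERIV_isconst_all) auto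
  then have "G (c v) = v" using assms by simp
  then show ?thesis by (metis G_inv2)
qed

lemma exist: "(inv G has_real_derivative F (inv G v)) (at v)"
proof -
  have "(inv G has_real_derivative inverse (1 / F (inv G v))) (at v)"
    by (rule has_field_derivative_inverse_strong_x[where f=G and g="inv G" and y=v and S=UNIV])
       (use G_deriv Fpos G_cont in \<open>auto simp: less_imp_neq[symmetric]\<close>)
  thus ?thesis by simp
qed

lemma x3_eq:
  assumes "\<forall>v. (b has_real_derivative F (b v)) (at v)"
    and "\<forall>v. (x3 has_real_derivative l1 * l2 * K / (l1 + F (b v))) (at v)" "x3 0 = 0" "b 0 = 0"
  shows "x3 v = Phi (b v)"
proof -
  have "((\<lambda>v. x3 v - Phi (b v)) has_real_derivative 0) (at x)" for x
  proof -
    have "((\<lambda>v. x3 v - Phi (b v)) has_real_derivative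
        (l1 * l2 * K / (l1 + F (b x)) - p (b x) * F (b x))) (at x)"
      by (intro derivative_intros DERIV_chain2[OF Phi_deriv] assms(1)[rule_format] assms(2)[rule_format])
    moreover have "l1 * l2 * K / (l1 + F (b x)) - p (b x) * F (b x) = 0"
      using Fpos[of "b x"] l1pos by (simp add: p_def)
    ultimately show ?thesis by simp
  qed
  then have "x3 v - Phi (b v) = x3 0 - Phi (b 0)" by (intro DERIV_isconst_all) auto
  then show ?thesis using assms by simp
qed

lemma x3_exist: "((\<lambda>v. Phi (inv G v)) has_real_derivative l1 * l2 * K / (l1 + F (inv G v))) (at v)"
proof -
  have "((\<lambda>v. Phi (inv G v)) has_real_derivative p (inv G v) * F (inv G v)) (at v)"
    by (intro DERIV_chain2[OF Phi_deriv] exist)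
  moreover have "p (inv G v) * F (inv G v) = l1 * l2 * K / (l1 + F (inv G v))"
    using Fpos[of "inv G v"] l1pos by (simp add: p_def)
  ultimately show ?thesis by simp
qed

lemma Phi_pi: "Phi pi = integral {0..pi} p"
  unfolding Phi_def sint_def
  by (rule interval_integral_eq_integral) (auto intro: borel_integrable_atLeastAtMost' p_cont)


lemma shift_b:
  assumes b: "\<forall>v. (b has_real_derivative F (b v)) (at v)" "b 0 = 0" and bW: "b W = pi"
  shows "b (v + W) = b v + pi"
proof -
  define c where "c v = b (v + W) - pi" for v
  have "(c has_real_derivative F (c v)) (at v)" for v
  proof -
    have d: "((\<lambda>v. b (v + W)) has_real_derivative F (b (v + W))) (at v)"
      using b(1)[rule_format, of "v + W"] by (simp add: DERIV_shift)
    have "(c has_real_derivative F (b (v + W)) - 0) (at v)"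
      unfolding c_def by (intro DERIV_diff d DERIV_const)
    moreover have "F (b (v + W)) = F (c v)"
      using F_periodic[of l1 l2 K "c v"] by (simp add: c_def)
    ultimately show ?thesis by simp
  qed
  moreover have "c 0 = 0" using bW by (simp add: c_def)
  ultimately have "c v = inv G v" using uniq by blast
  moreover have "b v = inv G v" using uniq b by blast
  ultimately show ?thesis by (simp add: c_def)
qed

lemma shift_x3:
  assumes bs: "\<forall>v. b (v + W) = b v + pi"
    and x3: "\<forall>v. (x3 has_real_derivative l1 * l2 * K / (l1 + F (b v))) (at v)"
  shows "x3 (v + W) = x3 v + x3 W - x3 0"
proof -
  have "((\<lambda>v. x3 (v + W) - x3 v) has_real_derivative 0) (at y)" for y
  proof -
    have d: "((\<lambda>v. x3 (v + W)) has_real_derivative l1 * l2 * K / (l1 + F (b (y + W)))) (at y)"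
      using x3[rule_format, of "y + W"] by (simp add: DERIV_shift)
    have "((\<lambda>v. x3 (v + W) - x3 v) has_real_derivative
       l1 * l2 * K / (l1 + F (b (y + W))) - l1 * l2 * K / (l1 + F (b y))) (at y)"
      by (intro DERIV_diff d x3[rule_format])
    moreover have "F (b (y + W)) = F (b y)" using bs F_periodic by simp
    ultimately show ?thesis by simp
  qed
  then have "x3 (v + W) - x3 v = x3 (0 + W) - x3 0" by (intro DERIV_isconst_all) auto
  then show ?thesis by simp
qed

end

lemma e2_comp: "e2_mult (0,0,c) (e2_mult (0,0,d) q) = e2_mult (0,0,c+d) q"
  by (cases q) (simp add: e2_mult_def sin_add cos_add algebra_simps)

lemma e2_zero: "e2_mult (0,0,0) q = q"
  by (cases q) (simp add: e2_mult_def)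

definition movs :: "(complex \<Rightarrow> real \<times> real \<times> real) \<Rightarrow> real \<Rightarrow> bool" where
  "movs X t \<longleftrightarrow> (\<forall>z. \<exists>z'. e2_mult (0,0,t) (X z) = X z')"

lemma movs_add: "movs X s \<Longrightarrow> movs X t \<Longrightarrow> movs X (s + t)"
  unfolding movs_def by (metis e2_comp)

lemma movs_range:
  assumes "movs X t" "movs X (-t)"
  shows "e2_mult (0,0,t) ` range X = range X"
proof
  show "e2_mult (0,0,t) ` range X \<subseteq> range X" using assms(1) unfolding movs_def
    by (metis (no_types) image_subsetI rangeE rangeI)
  show "range X \<subseteq> e2_mult (0,0,t) ` range X"
  proof
    fix q assume "q \<in> range X"
    then obtain z where z: "q = X z" by auto
    obtain z' where "e2_mult (0,0,-t) (X z) = X z'" using assms(2) unfolding movs_def by blast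
    hence "q = e2_mult (0,0,t) (X z')" using e2_comp[of t "-t" "X z"] e2_zero z by simp
    thus "q \<in> e2_mult (0,0,t) ` range X" by auto
  qed
qed

lemma rot_alg:
  fixes k0 k1 k2 D S X B c :: real
  shows "e2_mult (0,0,c) (k0 * (k1 * cos X * sin B + k2 * sin X * cos B) * D * S, k0 * (k1 * sin X * sin B - k2 * cos X * cos B) * D * S, X)
    = (k0 * (k1 * cos (X+c) * (-sin B) + k2 * sin (X+c) * (-cos B)) * D * (-S),
       k0 * (k1 * sin (X+c) * (-sin B) - k2 * cos (X+c) * (-cos B)) * D * (-S), X+c)"
  by (simp add: e2_mult_def cos_add sin_add algebra_simps)

lemma X_shift:
  assumes bs: "\<forall>v. b (v + W) = b v + pi" and xs: "\<forall>v. x3 (v + W) = x3 v + c"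
  shows "e2_mult (0,0,c) (helicoid_X l1 l2 K b x3 z) = helicoid_X l1 l2 K b x3 (Complex (- Re z) (Im z + W))"
proof -
  have h1: "b (Im z + W) = b (Im z) + pi" using bs by blast
  have h2: "x3 (Im z + W) = x3 (Im z) + c" using xs by blast
  have h3: "sinh (- l1 * - Re z) = - sinh (- l1 * Re z)" by simp
  show ?thesis
    by (simp only: helicoid_X_def Let_def complex.sel h1 h2 h3 F_periodic rot_alg sin_periodic_pi cos_periodic_pi)
qed

lemma X_movs:
  assumes bs: "\<forall>v. b (v + W) = b v + pi" and xs: "\<forall>v. x3 (v + W) = x3 v + c"
  shows "movs (helicoid_X l1 l2 K b x3) c" "movs (helicoid_X l1 l2 K b x3) (-c)"
proof -
  show "movs (helicoid_X l1 l2 K b x3) c"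
    unfolding movs_def using X_shift[OF assms] by blast
  show "movs (helicoid_X l1 l2 K b x3) (-c)"
    unfolding movs_def
  proof
    fix z
    let ?z = "Complex (- Re z) (Im z - W)"
    have "e2_mult (0,0,c) (helicoid_X l1 l2 K b x3 ?z) = helicoid_X l1 l2 K b x3 z"
      using X_shift[OF assms, of l1 l2 K ?z] by (simp add: complex_eq_iff)
    hence "e2_mult (0,0,-c) (helicoid_X l1 l2 K b x3 z) = e2_mult (0,0,-c) (e2_mult (0,0,c) (helicoid_X l1 l2 K b x3 ?z))"
      by simp
    also have "\<dots> = helicoid_X l1 l2 K b x3 ?z" by (simp add: e2_comp e2_zero)
    finally have "e2_mult (0,0,-c) (helicoid_X l1 l2 K b x3 z) = helicoid_X l1 l2 K b x3 ?z" .
    thus "\<exists>z'. e2_mult (0,0,-c) (helicoid_X l1 l2 K b x3 z) = helicoid_X l1 l2 K b x3 z'" by blast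
  qed
qed


definition Pk :: "real \<Rightarrow> real \<Rightarrow> real \<Rightarrow> real" where
  "Pk l1 l2 K = integral {0..pi} (\<lambda>t. l1 * l2 * K / ((l1 + bK_rhs l1 l2 K t) * bK_rhs l1 l2 K t))"

lemma (in hk) Pk_eq: "Pk l1 l2 K = integral {0..pi} p"
  unfolding Pk_def p_def ..

lemma Pk_0: "Pk l1 l2 0 = 0" by (simp add: Pk_def)

lemma Pk_cont:
  assumes "0 < l2" "l2 \<le> l1" "k < 1"
  shows "continuous_on {0..k} (Pk l1 l2)"
proof -
  have Fp: "0 < bK_rhs l1 l2 (fst x) (snd x)" if "x \<in> {0..k} \<times> cbox 0 pi" for x
    using that F_bounds(3)[of l2 l1 "fst x" "snd x"] assms by auto
  have l1: "0 < l1" using assms by linarith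
  have nz: "\<forall>x\<in>{0..k} \<times> cbox 0 pi. (l1 + bK_rhs l1 l2 (fst x) (snd x)) * bK_rhs l1 l2 (fst x) (snd x) \<noteq> 0"
    using Fp l1 by (metis add_pos_pos less_numeral_extra(3) mult_pos_pos)
  have "continuous_on ({0..k} \<times> cbox 0 pi)
     (\<lambda>(K, t). l1 * l2 * K / ((l1 + bK_rhs l1 l2 K t) * bK_rhs l1 l2 K t))"
    unfolding case_prod_beta'
    by (intro continuous_on_divide continuous_intros nz)
  from integral_continuous_on_param[OF this]
  show ?thesis unfolding Pk_def by simp
qed

lemma Pk_lower:
  assumes l: "0 < l2" "l2 \<le> l1" and a: "0 < a" "a \<le> l1 / 2"
  defines "e \<equiv> sqrt (l1\<^sup>2 - l2\<^sup>2) + 1"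
  shows "l2 / (4 * e) * (ln (a + e * pi) - ln a) \<le> Pk l1 l2 (1 - (a / l1)\<^sup>2)"
proof -
  define K where "K = 1 - (a / l1)\<^sup>2"
  have l1: "0 < l1" using l by linarith
  have al: "a / l1 \<le> 1 / 2" using a l1 by (simp add: divide_simps)
  have al0: "0 < a / l1" using a l1 by simp
  have sq: "(a / l1)\<^sup>2 \<le> 1 / 4"
    using power_mono[OF al, of 2] al0 by (simp add: power_divide)
  have K12: "1 / 2 \<le> K" using sq by (simp add: K_def)
  have K1: "K < 1" using a l1 by (simp add: K_def)
  interpret hk l1 l2 K using l K12 K1 by unfold_locales auto
  have "l2\<^sup>2 \<le> l1\<^sup>2" using l by (intro power_mono) auto
  hence e1: "1 \<le> e" by (simp add: e_def)
  have d0: "0 \<le> l1\<^sup>2 - l2\<^sup>2" using l by (simp add: power_mono)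
  have sK: "l1 * sqrt (1 - K) = a"
    using a l1 by (simp add: K_def real_sqrt_divide)
  have Fle2: "F t \<le> a + e * t" if t: "0 \<le> t" for t
  proof -
    have s: "(sin t)\<^sup>2 \<le> t\<^sup>2" using abs_sin_x_le_abs_x[of t]
      by (metis abs_ge_zero power2_abs power_mono)
    have "K * (l1\<^sup>2 - l2\<^sup>2) * (sin t)\<^sup>2 \<le> 1 * (l1\<^sup>2 - l2\<^sup>2) * t\<^sup>2"
      using K1 K12 d0 s by (intro mult_mono) auto
    also have "\<dots> = (sqrt (l1\<^sup>2 - l2\<^sup>2) * t)\<^sup>2" using d0 by (simp add: power_mult_distrib)
    also have "\<dots> \<le> (e * t)\<^sup>2" using t d0 by (intro power_mono mult_right_mono) (auto simp: e_def)
    finally have 1: "K * (l1\<^sup>2 - l2\<^sup>2) * (sin t)\<^sup>2 \<le> (e * t)\<^sup>2" .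
    have "l1\<^sup>2 * (1 - K) = a\<^sup>2" using a l1 by (simp add: K_def power_divide)
    have "l1\<^sup>2 * (1 - K) + K * (l1\<^sup>2 - l2\<^sup>2) * (sin t)\<^sup>2 \<le> (a + e * t)\<^sup>2"
    proof -
      have "0 \<le> 2 * a * (e * t)" using a t e1 by simp
      thus ?thesis using 1 \<open>l1\<^sup>2 * (1 - K) = a\<^sup>2\<close> by (simp add: power2_sum)
    qed
    hence "F t \<le> sqrt ((a + e * t)\<^sup>2)" unfolding bK_rhs_def Q_eq by (rule real_sqrt_le_mono)
    thus ?thesis using a t e1 by simp
  qed
  have low: "l2 / (4 * (a + e * t)) \<le> p t" if t: "t \<in> {0..pi}" for t
  proof -
    have t0: "0 \<le> t" using t by simp
    have ap: "0 < a + e * t" using a t0 e1 by (simp add: add_pos_nonneg)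
    have "(l1 + F t) * F t \<le> (2 * l1) * (a + e * t)"
      using Fle[of t] Fle2[OF t0] Fpos[of t] l1 by (intro mult_mono) auto
    hence "l1 * l2 * K / ((2 * l1) * (a + e * t)) \<le> l1 * l2 * K / ((l1 + F t) * F t)"
      using Fpos[of t] l1 l K12 ap by (intro divide_left_mono) (auto intro!: mult_pos_pos)
    moreover have "l1 * l2 * K / ((2 * l1) * (a + e * t)) = l2 * K / (2 * (a + e * t))"
      using l1 by simp
    moreover have "l2 / (4 * (a + e * t)) \<le> l2 * K / (2 * (a + e * t))"
    proof -
      have "l2 * (1/2) \<le> l2 * K" using l K12 by (intro mult_left_mono) auto
      hence "l2 * (1/2) / (2 * (a + e * t)) \<le> l2 * K / (2 * (a + e * t))"
        using ap by (intro divide_right_mono) auto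
      moreover have "l2 / (4 * (a + e * t)) = l2 * (1/2) / (2 * (a + e * t))" by simp
      ultimately show ?thesis by simp
    qed
    ultimately show ?thesis unfolding p_def by linarith
  qed
  have der: "((\<lambda>t. l2 / (4 * e) * ln (a + e * t)) has_real_derivative l2 / (4 * (a + e * t))) (at t)"
    if "t \<in> {0..pi}" for t
  proof -
    have ap: "0 < a + e * t" using a that e1 by (simp add: add_pos_nonneg)
    have inner: "((\<lambda>t. a + e * t) has_real_derivative e) (at t)"
      by (auto intro!: derivative_eq_intros)
    have "((\<lambda>t. l2 / (4 * e) * ln (a + e * t)) has_real_derivative l2 / (4 * e) * (1 / (a + e * t) * e)) (at t)"
      by (intro DERIV_cmult DERIV_chain2[OF DERIV_ln_divide[OF ap] inner])
    moreover have "l2 / (4 * e) * (1 / (a + e * t) * e) = l2 / (4 * (a + e * t))"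
      using e1 by simp
    ultimately show ?thesis by simp
  qed
  have hi: "((\<lambda>t. l2 / (4 * (a + e * t))) has_integral
       (l2 / (4 * e) * ln (a + e * pi) - l2 / (4 * e) * ln (a + e * 0))) {0..pi}"
    by (rule fundamental_theorem_of_calculus)
       (use der in \<open>auto simp: has_real_derivative_iff_has_vector_derivative[symmetric] intro: has_field_derivative_at_within\<close>)
  have pint: "p integrable_on {0..pi}" by (rule integrable_continuous_interval) (rule p_cont)
  have "l2 / (4 * e) * ln (a + e * pi) - l2 / (4 * e) * ln (a + e * 0) \<le> integral {0..pi} p"
    by (rule has_integral_le[OF hi integrable_integral[OF pint]]) (use low in auto)
  thus ?thesis using Pk_eq by (simp add: K_def right_diff_distrib)
qed

lemma Pk_big:
  assumes l: "0 < l2" "l2 \<le> l1" and M: "0 < M"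
  shows "\<exists>k. 0 < k \<and> k < 1 \<and> M \<le> Pk l1 l2 k"
proof -
  define e where "e = sqrt (l1\<^sup>2 - l2\<^sup>2) + 1"
  have "l2\<^sup>2 \<le> l1\<^sup>2" using l by (intro power_mono) auto
  hence e1: "1 \<le> e" by (simp add: e_def)
  have l1: "0 < l1" using l by linarith
  define N where "N = 4 * e * M / l2"
  define a where "a = min (l1 / 2) (e * pi * exp (- N))"
  have a0: "0 < a" using l1 e1 by (simp add: a_def)
  have a2: "a \<le> l1 / 2" by (simp add: a_def)
  have "ln a \<le> ln (e * pi * exp (- N))" using a0 by (simp add: a_def)
  also have "\<dots> = ln (e * pi) - N" using e1 by (simp add: ln_mult)
  finally have 1: "ln a \<le> ln (e * pi) - N" .
  have "0 < e * pi" using e1 by simp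
  hence "ln (e * pi) \<le> ln (a + e * pi)" using a0 by (subst ln_le_cancel_iff) auto
  with 1 have "N \<le> ln (a + e * pi) - ln a" by linarith
  hence "l2 / (4 * e) * N \<le> l2 / (4 * e) * (ln (a + e * pi) - ln a)"
    using l e1 by (intro mult_left_mono) auto
  moreover have "l2 / (4 * e) * N = M" using l e1 by (simp add: N_def)
  ultimately have "M \<le> Pk l1 l2 (1 - (a / l1)\<^sup>2)"
    using Pk_lower[OF l a0 a2] unfolding e_def by linarith
  moreover have "0 < 1 - (a / l1)\<^sup>2" "1 - (a / l1)\<^sup>2 < 1"
  proof -
    have "a / l1 \<le> 1 / 2" using a2 l1 by (simp add: divide_simps)
    hence "(a / l1)\<^sup>2 \<le> (1/2)\<^sup>2" using a0 l1 by (intro power_mono) auto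
    moreover have "(1/2::real)\<^sup>2 = 1/4" by (simp add: power2_eq_square)
    ultimately show "0 < 1 - (a / l1)\<^sup>2" by linarith
    show "1 - (a / l1)\<^sup>2 < 1" using a0 l1 by simp
  qed
  ultimately show ?thesis by blast
qed

lemma Pk_hit:
  assumes l: "0 < l2" "l2 \<le> l1" and M: "0 < M"
  shows "\<exists>K. 0 < K \<and> K < 1 \<and> Pk l1 l2 K = M"
proof -
  obtain k where k: "0 < k" "k < 1" "M \<le> Pk l1 l2 k" using Pk_big[OF l M] by blast
  have "Pk l1 l2 0 \<le> M" using M by (simp add: Pk_0)
  then obtain K where K: "0 \<le> K" "K \<le> k" "Pk l1 l2 K = M"
    using IVT'[of "Pk l1 l2" 0 M k] k Pk_cont[OF l k(2)] by auto
  have "K \<noteq> 0" using K M by (auto simp: Pk_0)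
  thus ?thesis using K k by (metis order.not_eq_order_implies_strict order.strict_trans1)
qed


theorem proposition4p4:
  fixes l1 l2 T :: real
  assumes "admissible_lambdas l1 l2"
    and "T \<noteq> 0"
  shows "\<exists>K. K \<in> {-1<..<1} - {0} \<and>
           (\<exists>b x3 W. helicoid_data l1 l2 K b x3 W) \<and>
           (\<forall>b x3 W. helicoid_data l1 l2 K b x3 W \<longrightarrow>
              2 * \<bar>x3 W\<bar> = \<bar>T\<bar> \<and>
              e2_mult (0, 0, T) ` range (helicoid_X l1 l2 K b x3) = range (helicoid_X l1 l2 K b x3))"
proof -
  have l: "0 < l2" "l2 \<le> l1" using assms(1) unfolding admissible_lambdas_def by auto
  have M: "0 < \<bar>T\<bar> / 2" using assms(2) by simp
  obtain K where K: "0 < K" "K < 1" "Pk l1 l2 K = \<bar>T\<bar> / 2" using Pk_hit[OF l M] by blast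
  interpret hk l1 l2 K using l K by unfold_locales auto
  have Kin: "K \<in> {-1<..<1} - {0}" using K by auto
  have ex: "helicoid_data l1 l2 K (inv G) (\<lambda>v. Phi (inv G v)) (G pi)"
    unfolding helicoid_data_def
  proof (intro conjI allI impI)
    fix v show "(inv G has_real_derivative F (inv G v)) (at v)" by (rule exist)
  next
    fix v show "((\<lambda>v. Phi (inv G v)) has_real_derivative l1 * l2 * K / (l1 + F (inv G v))) (at v)"
      by (rule x3_exist)
  next
    show "inv G 0 = 0" using G_inv2[of 0] by simp
    thus "Phi (inv G 0) = 0" by simp
  next
    show "0 < G pi" using G_strict[of 0 pi] by simp
  next
    show "inv G (G pi) = pi" by simp
  next
    fix w assume "0 < w" "inv G w = pi"
    thus "w = G pi" using G_inv1[of w] by simp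
  qed
  have all: "2 * \<bar>x3 W\<bar> = \<bar>T\<bar> \<and>
      e2_mult (0, 0, T) ` range (helicoid_X l1 l2 K b x3) = range (helicoid_X l1 l2 K b x3)"
    if hd: "helicoid_data l1 l2 K b x3 W" for b x3 W
  proof -
    from hd have bd: "\<forall>v. (b has_real_derivative F (b v)) (at v)" and b0: "b 0 = 0"
      and xd: "\<forall>v. (x3 has_real_derivative l1 * l2 * K / (l1 + F (b v))) (at v)" and x0: "x3 0 = 0"
      and bW: "b W = pi"
      unfolding helicoid_data_def by auto
    have binv: "b v = inv G v" for v using uniq[OF bd b0] .
    have WG: "W = G pi" using bW binv[of W] G_inv1[of W] by simp
    have x3W: "x3 W = Pk l1 l2 K"
      using x3_eq[OF bd xd x0 b0, of W] bW Phi_pi Pk_eq by simp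
    have c: "x3 W = \<bar>T\<bar> / 2" using x3W K by simp
    have bs: "\<forall>v. b (v + W) = b v + pi" using shift_b[OF bd b0 bW] by blast
    have xs: "\<forall>v. x3 (v + W) = x3 v + x3 W" using shift_x3[OF bs xd] x0 by simp
    note mv = X_movs[OF bs xs, of l1 l2 K]
    have m1: "movs (helicoid_X l1 l2 K b x3) (x3 W + x3 W)" by (rule movs_add[OF mv(1) mv(1)])
    have m2: "movs (helicoid_X l1 l2 K b x3) (- x3 W + - x3 W)" by (rule movs_add[OF mv(2) mv(2)])
    have "T = x3 W + x3 W \<or> T = - x3 W + - x3 W" using c by linarith
    hence "e2_mult (0, 0, T) ` range (helicoid_X l1 l2 K b x3) = range (helicoid_X l1 l2 K b x3)"
      using movs_range[OF m1] movs_range[OF m2] m1 m2 by auto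
    moreover have "2 * \<bar>x3 W\<bar> = \<bar>T\<bar>" using c by simp
    ultimately show ?thesis by blast
  qed
  show ?thesis using Kin ex all by blast
qed

end
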